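(* Let $I\subseteq R$ be a good ideal. Then for every integer $t\ge0$, $$I_{t+1,0,\dots,0}=(I_{t,0,\dots,0}\cdot I):\langle\mu_1\rangle.$$
   Context: Let $\mathbb K$ be a field, $R=\mathbb K[x_1,\dots,x_n]$, $\mathfrak m=\langle x_1,\dots,x_n\rangle$, $\mathbb N=\{0,1,2,\dots\}$. A monomial $x_1^{\alpha_1}\cdots x_n^{\alpha_n}$ is identified with the point $(\alpha_1,\dots,\alpha_n)\in\mathbb N^n$. For a monomial ideal $I$, $G(I)$ denotes its (unique) minimal monomial generating set. If $I$ is an $\mathfrak m$-primary monomial ideal, then for each $i$ there is a unique $d_i\ge1$ with $x_i^{d_i}\in G(I)$; write $\mu_i=x_i^{d_i}$. For $(a_1,\dots,a_n)\in\mathbb N^n$ the box associated to $I$ is $B_{a_1,\dots,a_n}=([a_1d_1,(a_1+1)d_1]\times\cdots\times[a_nd_n,(a_n+1)d_n])\cap\mathbb N^n$; a monomial belongs to a box if its exponent vector does. An $\mathfrak m$-primary monomial ideal $I$ is called good if for every integer $l\ge1$, every element of $G(I^l)$ belongs to some box $B_{a_1,\dots,a_n}$ with $a_1+\dots+a_n=l-1$. For a good ideal $I$ and $a=(a_1,\dots,a_n)\in\mathbb N^n$, with $l=a_1+\dots+a_n+1$, define $I_{a_1,\dots,a_n}=\left\langle \frac{m}{\mu_1^{a_1}\cdots\mu_n^{a_n}} : m\in B_{a_1,\dots,a_n}\cap G(I^l)\right\rangle$. *)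

theory Defs
  imports Main
begin

(* Monomials of K[x_0,...,x_{n-1}] are identified with exponent vectors
   a :: nat => nat with a i = 0 for i >= n (variable x_{i+1} of the paper is index i).
   A monomial ideal is identified with the set of monomials it contains
   (an upward-closed set of exponent vectors); this determines it uniquely. *)

definition monomials :: "nat \<Rightarrow> (nat \<Rightarrow> nat) set" where
  "monomials n = {a. \<forall>i\<ge>n. a i = 0}"

definition is_monomial_ideal :: "nat \<Rightarrow> (nat \<Rightarrow> nat) set \<Rightarrow> bool" where
  "is_monomial_ideal n I \<longleftrightarrow> I \<subseteq> monomials n \<and>
     (\<forall>a\<in>I. \<forall>b\<in>monomials n. (\<forall>i. a i \<le> b i) \<longrightarrow> b \<in> I)"

definition mideal :: "nat \<Rightarrow> (nat \<Rightarrow> nat) set \<Rightarrow> (nat \<Rightarrow> nat) set" where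
  "mideal n G = {b \<in> monomials n. \<exists>a\<in>G. \<forall>i. a i \<le> b i}"

definition mgens :: "(nat \<Rightarrow> nat) set \<Rightarrow> (nat \<Rightarrow> nat) set" where
  "mgens I = {a \<in> I. \<forall>b\<in>I. (\<forall>i. b i \<le> a i) \<longrightarrow> b = a}"

definition mprod :: "nat \<Rightarrow> (nat \<Rightarrow> nat) set \<Rightarrow> (nat \<Rightarrow> nat) set \<Rightarrow> (nat \<Rightarrow> nat) set" where
  "mprod n I J = mideal n {(\<lambda>i. a i + b i) | a b. a \<in> I \<and> b \<in> J}"

definition mpow :: "nat \<Rightarrow> (nat \<Rightarrow> nat) set \<Rightarrow> nat \<Rightarrow> (nat \<Rightarrow> nat) set" where
  "mpow n I l = ((\<lambda>J. mprod n J I) ^^ l) (mideal n {(\<lambda>i. 0)})"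

definition mcolon :: "nat \<Rightarrow> (nat \<Rightarrow> nat) set \<Rightarrow> (nat \<Rightarrow> nat) set \<Rightarrow> (nat \<Rightarrow> nat) set" where
  "mcolon n J K = {b \<in> monomials n. \<forall>c\<in>K. (\<lambda>i. b i + c i) \<in> J}"

definition xpow :: "nat \<Rightarrow> nat \<Rightarrow> (nat \<Rightarrow> nat)" where
  "xpow i d = (\<lambda>j. if j = i then d else 0)"

definition m_primary :: "nat \<Rightarrow> (nat \<Rightarrow> nat) set \<Rightarrow> bool" where
  "m_primary n I \<longleftrightarrow> is_monomial_ideal n I \<and> (\<lambda>i. 0) \<notin> I \<and>
     (\<forall>i<n. \<exists>d. xpow i d \<in> I)"

definition dexp :: "(nat \<Rightarrow> nat) set \<Rightarrow> nat \<Rightarrow> nat" where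
  "dexp I i = (THE d. d \<ge> 1 \<and> xpow i d \<in> mgens I)"

definition box :: "nat \<Rightarrow> (nat \<Rightarrow> nat) set \<Rightarrow> (nat \<Rightarrow> nat) \<Rightarrow> (nat \<Rightarrow> nat) set" where
  "box n I a = {b \<in> monomials n. \<forall>i<n. a i * dexp I i \<le> b i \<and> b i \<le> (a i + 1) * dexp I i}"

definition good :: "nat \<Rightarrow> (nat \<Rightarrow> nat) set \<Rightarrow> bool" where
  "good n I \<longleftrightarrow> m_primary n I \<and>
     (\<forall>l\<ge>1. \<forall>m\<in>mgens (mpow n I l).
        \<exists>a\<in>monomials n. (\<Sum>i<n. a i) = l - 1 \<and> m \<in> box n I a)"

definition Ia :: "nat \<Rightarrow> (nat \<Rightarrow> nat) set \<Rightarrow> (nat \<Rightarrow> nat) \<Rightarrow> (nat \<Rightarrow> nat) set" where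
  "Ia n I a = mideal n {(\<lambda>i. m i - a i * dexp I i) | m.
      m \<in> box n I a \<inter> mgens (mpow n I ((\<Sum>i<n. a i) + 1))}"

end

theory Submission imports Defs begin

lemma mideal_up:
  "x \<in> mideal n G \<Longrightarrow> y \<in> monomials n \<Longrightarrow> (\<forall>i. x i \<le> y i) \<Longrightarrow> y \<in> mideal n G"
  unfolding mideal_def by (auto intro: order_trans)

lemma mideal_sub: "mideal n G \<subseteq> monomials n"
  unfolding mideal_def by auto

lemma mpow_0: "mpow n I 0 = monomials n"
  unfolding mpow_def mideal_def monomials_def by auto

lemma mpow_Suc: "mpow n I (Suc l) = mprod n (mpow n I l) I"
  unfolding mpow_def by simp

lemma mpow_mideal: "\<exists>G. mpow n I l = mideal n G"
  by (cases l) (auto simp: mpow_def mprod_def)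

lemma mpow_up:
  "x \<in> mpow n I l \<Longrightarrow> y \<in> monomials n \<Longrightarrow> (\<forall>i. x i \<le> y i) \<Longrightarrow> y \<in> mpow n I l"
  using mpow_mideal[of n I l] mideal_up by metis

lemma mpow_sub: "mpow n I l \<subseteq> monomials n"
  using mpow_mideal[of n I l] mideal_sub by metis

lemma monomials_add: "a \<in> monomials n \<Longrightarrow> b \<in> monomials n \<Longrightarrow> (\<lambda>i. a i + b i) \<in> monomials n"
  unfolding monomials_def by auto

lemma mprod_intro:
  "a \<in> J \<Longrightarrow> b \<in> K \<Longrightarrow> y \<in> monomials n \<Longrightarrow> (\<forall>i. a i + b i \<le> y i) \<Longrightarrow> y \<in> mprod n J K"
  unfolding mprod_def mideal_def by fastforce

lemma mprod_elim:
  "y \<in> mprod n J K \<Longrightarrow> \<exists>a\<in>J. \<exists>b\<in>K. y \<in> monomials n \<and> (\<forall>i. a i + b i \<le> y i)"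
  unfolding mprod_def mideal_def by blast

lemma mpow_1: "is_monomial_ideal n I \<Longrightarrow> mpow n I 1 = I"
proof
  assume mi: "is_monomial_ideal n I"
  show "mpow n I 1 \<subseteq> I"
  proof
    fix y assume "y \<in> mpow n I 1"
    then have "y \<in> mprod n (mpow n I 0) I" using mpow_Suc[of n I 0] by simp
    then obtain a b where "a \<in> mpow n I 0" "b \<in> I" "y \<in> monomials n" "\<forall>i. a i + b i \<le> y i"
      using mprod_elim by blast
    then show "y \<in> I" using mi unfolding is_monomial_ideal_def
      by (metis add_leE)
  qed
  show "I \<subseteq> mpow n I 1"
  proof
    fix y assume y: "y \<in> I"
    have z: "(\<lambda>i. 0) \<in> mpow n I 0" by (simp add: mpow_0 monomials_def)
    have "y \<in> monomials n" using y mi unfolding is_monomial_ideal_def by auto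
    then have "y \<in> mprod n (mpow n I 0) I" using mprod_intro[OF z y] by simp
    then show "y \<in> mpow n I 1" using mpow_Suc[of n I 0] by simp
  qed
qed

lemma mpow_add:
  "a \<in> mpow n I l1 \<Longrightarrow> b \<in> mpow n I l2 \<Longrightarrow> (\<lambda>i. a i + b i) \<in> mpow n I (l1 + l2)"
proof (induction l2 arbitrary: b)
  case 0
  have "a \<in> monomials n" "b \<in> monomials n" using 0 mpow_sub by blast+
  then show ?case using mpow_up[OF 0(1)] monomials_add by simp
next
  case (Suc l2)
  have bS: "b \<in> mprod n (mpow n I l2) I" using Suc.prems(2) mpow_Suc by simp
  then obtain b1 b2 where b1: "b1 \<in> mpow n I l2" and b2: "b2 \<in> I" and bm: "b \<in> monomials n"
     and le: "\<forall>i. b1 i + b2 i \<le> b i" using mprod_elim by blast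
  have "(\<lambda>i. a i + b1 i) \<in> mpow n I (l1 + l2)" using Suc.IH[OF Suc.prems(1) b1] .
  moreover have "(\<lambda>i. a i + b i) \<in> monomials n"
    using monomials_add bm Suc.prems(1) mpow_sub by blast
  ultimately have "(\<lambda>i. a i + b i) \<in> mprod n (mpow n I (l1 + l2)) I"
    using mprod_intro[OF _ b2] le by (simp add: add.assoc add_left_mono)
  then show ?case using mpow_Suc[of n I "l1 + l2"] by simp
qed

lemma mpow_scale:
  "a \<in> mpow n I l \<Longrightarrow> (\<lambda>i. k * a i) \<in> mpow n I (k * l)"
proof (induction k)
  case 0
  then show ?case by (simp add: mpow_0 monomials_def)
next
  case (Suc k)
  have "(\<lambda>i. a i + k * a i) \<in> mpow n I (l + k * l)" using mpow_add[OF Suc.prems Suc.IH[OF Suc.prems]] .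
  then show ?case by simp
qed

lemma mgens_below:
  assumes "S \<subseteq> monomials n" "c \<in> S"
  shows "\<exists>m\<in>mgens S. \<forall>i. m i \<le> c i"
proof -
  have "\<forall>c\<in>S. (\<Sum>i<n. c i) = k \<longrightarrow> (\<exists>m\<in>mgens S. \<forall>i. m i \<le> c i)" for k
  proof (induction k rule: less_induct)
    case (less k)
    show ?case
    proof (intro ballI impI)
      fix c assume c: "c \<in> S" and k: "(\<Sum>i<n. c i) = k"
      show "\<exists>m\<in>mgens S. \<forall>i. m i \<le> c i"
      proof (cases "c \<in> mgens S")
        case True then show ?thesis by auto
      next
        case False
        then obtain b where b: "b \<in> S" "\<forall>i. b i \<le> c i" "b \<noteq> c" using c unfolding mgens_def by auto
        then obtain i where i: "b i \<noteq> c i" by auto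
        have "i < n"
        proof (rule ccontr)
          assume "\<not> i < n"
          then have "b i = 0" "c i = 0" using b(1) c assms(1) unfolding monomials_def by auto
          then show False using i by simp
        qed
        then have "(\<Sum>i<n. b i) < (\<Sum>i<n. c i)"
          using b(2) i by (intro sum_strict_mono_ex1) (auto simp: le_less)
        then obtain m where "m \<in> mgens S" "\<forall>i. m i \<le> b i" using less.IH b(1) k by blast
        then show ?thesis using b(2) by (meson order_trans)
      qed
    qed
  qed
  then show ?thesis using assms(2) by blast
qed


lemma xpow_le_eq:
  "(\<forall>k. b k \<le> xpow i d k) \<Longrightarrow> b = xpow i (b i)"
  unfolding xpow_def by (rule ext) (metis le_zero_eq)

lemma dexp_props:
  assumes mp: "m_primary n I" and i: "i < n"
  shows "dexp I i \<ge> 1 \<and> xpow i (dexp I i) \<in> I"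
proof -
  obtain d0 where d0: "xpow i d0 \<in> I" using mp i unfolding m_primary_def by blast
  define d where "d = (LEAST d. xpow i d \<in> I)"
  have dI: "xpow i d \<in> I" unfolding d_def using d0 by (rule LeastI)
  have dmin: "\<And>d'. xpow i d' \<in> I \<Longrightarrow> d \<le> d'" unfolding d_def by (rule Least_le)
  have d1: "d \<ge> 1"
  proof (rule ccontr)
    assume "\<not> d \<ge> 1" then have "d = 0" by simp
    then have "xpow i d = (\<lambda>i. 0)" unfolding xpow_def by auto
    then show False using dI mp unfolding m_primary_def by auto
  qed
  have gen: "xpow i d \<in> mgens I"
    unfolding mgens_def
  proof (intro CollectI conjI ballI impI dI)
    fix b assume b: "b \<in> I" "\<forall>k. b k \<le> xpow i d k"
    have be: "b = xpow i (b i)" using xpow_le_eq b(2) by blast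
    then have "d \<le> b i" using dmin b(1) by metis
    moreover have "b i \<le> d" using b(2) unfolding xpow_def by (metis)
    ultimately show "b = xpow i d" using be by simp
  qed
  have "(THE d. d \<ge> 1 \<and> xpow i d \<in> mgens I) = d"
  proof (rule the_equality)
    show "d \<ge> 1 \<and> xpow i d \<in> mgens I" using d1 gen by simp
    fix d' assume d': "d' \<ge> 1 \<and> xpow i d' \<in> mgens I"
    then have "xpow i d' \<in> I" unfolding mgens_def by auto
    then have "d \<le> d'" using dmin by blast
    then have "\<forall>k. xpow i d k \<le> xpow i d' k" unfolding xpow_def by auto
    then have "xpow i d = xpow i d'" using d' dI unfolding mgens_def by auto
    then show "d' = d" unfolding xpow_def by (metis)
  qed
  then show ?thesis using d1 dI unfolding dexp_def by simp
qed

lemma sum_one: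
  assumes "0 < (n::nat)" "\<forall>i<n. i \<noteq> 0 \<longrightarrow> a i = 0"
  shows "(\<Sum>i<n. a i) = (a 0 :: nat)"
proof -
  have "(\<Sum>i<n. a i) = (\<Sum>i\<in>{0}. a i)"
    by (rule sum.mono_neutral_right) (use assms in auto)
  then show ?thesis by simp
qed

lemma sum_two:
  assumes "j \<noteq> 0" "j < (n::nat)" "\<forall>i<n. i \<noteq> 0 \<longrightarrow> i \<noteq> j \<longrightarrow> a i = 0"
  shows "(\<Sum>i<n. a i) = (a 0 + a j :: nat)"
proof -
  have "(\<Sum>i<n. a i) = (\<Sum>i\<in>{0,j}. a i)"
    by (rule sum.mono_neutral_right) (use assms in auto)
  then show ?thesis using assms(1) by simp
qed

lemma sum_ge_two:
  assumes "j \<noteq> 0" "j < (n::nat)"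
  shows "a 0 + a j \<le> (\<Sum>i<n. a i :: nat)"
proof -
  have "(\<Sum>i\<in>{0,j}. a i) \<le> (\<Sum>i<n. a i)"
    by (rule sum_mono2) (use assms in auto)
  then show ?thesis using assms(1) by simp
qed

lemma sum_xpow0: "0 < n \<Longrightarrow> (\<Sum>i<n. xpow 0 k i) = k"
  by (subst sum_one) (auto simp: xpow_def)

lemma good_mp: "good n I \<Longrightarrow> m_primary n I" unfolding good_def by simp

lemma good_box:
  "good n I \<Longrightarrow> l \<ge> 1 \<Longrightarrow> m \<in> mgens (mpow n I l) \<Longrightarrow>
     \<exists>a\<in>monomials n. (\<Sum>i<n. a i) = l - 1 \<and> m \<in> box n I a"
  unfolding good_def by blast

lemma mgens_sub: "mgens S \<subseteq> S" unfolding mgens_def by auto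

lemma no_low:
  assumes g: "good n I" and l: "l \<ge> 1" and j: "j \<noteq> 0" "j < n"
    and y: "y \<in> mpow n I l" and ysupp: "\<forall>i<n. i \<noteq> 0 \<longrightarrow> i \<noteq> j \<longrightarrow> y i = 0"
    and yj: "y j \<le> dexp I j" and y0: "y 0 < (l - 1) * dexp I 0"
  shows False
proof -
  have mp: "m_primary n I" using g good_mp by blast
  have n0: "0 < n" using j by simp
  define d where "d = dexp I 0"
  have dpos: "\<And>i. i < n \<Longrightarrow> dexp I i \<ge> 1" using dexp_props[OF mp] by blast
  define N where "N = d + 1"
  have z: "(\<lambda>i. N * y i) \<in> mpow n I (N * l)" using mpow_scale[OF y] .
  obtain m where m: "m \<in> mgens (mpow n I (N * l))" "\<forall>i. m i \<le> N * y i"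
    using mgens_below[OF mpow_sub z] by blast
  have Nl: "N * l \<ge> 1" using l unfolding N_def by simp
  obtain a where a: "a \<in> monomials n" "(\<Sum>i<n. a i) = N * l - 1" "m \<in> box n I a"
    using good_box[OF g Nl m(1)] by blast
  have abox: "\<And>i. i < n \<Longrightarrow> a i * dexp I i \<le> m i" using a(3) unfolding box_def by auto
  have azero: "\<forall>i<n. i \<noteq> 0 \<longrightarrow> i \<noteq> j \<longrightarrow> a i = 0"
  proof (intro allI impI)
    fix i assume i: "i < n" "i \<noteq> 0" "i \<noteq> j"
    have "m i \<le> N * y i" using m(2) by blast
    moreover have "y i = 0" using ysupp i by blast
    ultimately have "a i * dexp I i \<le> 0" using abox[OF i(1)] by simp
    then show "a i = 0" using dpos[OF i(1)] by simp
  qed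
  have sum: "a 0 + a j = N * l - 1" using sum_two[OF j azero] a(2) by simp
  have "a j * dexp I j \<le> N * dexp I j" using abox[OF j(2)] m(2) yj
    by (meson le_trans mult_le_mono2)
  then have ajN: "a j \<le> N" using dpos[OF j(2)] by simp
  have a0: "a 0 * d \<le> N * y 0" using abox[OF n0] m(2) unfolding d_def by (meson le_trans)
  define L where "L = l - 1"
  have lL: "l = L + 1" using l unfolding L_def by simp
  have L1: "y 0 + 1 \<le> L * d" using y0 unfolding L_def d_def by simp
  have s2: "a 0 + 1 \<ge> N * L" using sum ajN unfolding lL by (simp add: algebra_simps N_def)
  have "(a 0 + 1) * d \<ge> N * L * d" using s2 by (rule mult_le_mono1)
  then have A: "a 0 * d + d \<ge> N * L * d" by (simp add: algebra_simps)
  have "N * (y 0 + 1) \<le> N * (L * d)" using L1 by (rule mult_le_mono2)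
  then have B: "N * y 0 + N \<le> N * L * d" by (simp add: algebra_simps)
  show False using A B a0 unfolding N_def by linarith
qed


lemma key:
  assumes g: "good n I" and n0: "0 < n" and l: "l \<ge> 1" and C: "C \<in> mpow n I l"
    and C0: "(l - 1) * dexp I 0 \<le> C 0"
  shows "\<exists>m \<in> mgens (mpow n I l) \<inter> box n I (xpow 0 (l - 1)). \<forall>i. m i \<le> C i"
proof -
  have mp: "m_primary n I" using g good_mp by blast
  have mi: "is_monomial_ideal n I" using mp unfolding m_primary_def by blast
  have dpos: "\<And>i. i < n \<Longrightarrow> dexp I i \<ge> 1 \<and> xpow i (dexp I i) \<in> I" using dexp_props[OF mp] by blast
  obtain m where m: "m \<in> mgens (mpow n I l)" "\<forall>i. m i \<le> C i"
    using mgens_below[OF mpow_sub C] by blast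
  obtain a where a: "a \<in> monomials n" "(\<Sum>i<n. a i) = l - 1" "m \<in> box n I a"
    using good_box[OF g l m(1)] by blast
  show ?thesis
  proof (cases "\<forall>j<n. j \<noteq> 0 \<longrightarrow> a j = 0")
    case True
    then have "a 0 = l - 1" using sum_one[OF n0, of a] a(2) by simp
    then have "\<forall>i<n. a i = xpow 0 (l - 1) i" using True unfolding xpow_def by auto
    then have "m \<in> box n I (xpow 0 (l - 1))" using a(3) unfolding box_def by auto
    then show ?thesis using m by blast
  next
    case False
    then obtain j where j: "j < n" "j \<noteq> 0" "a j \<noteq> 0" by blast
    have "a j * dexp I j \<le> m j" using a(3) j(1) unfolding box_def by auto
    moreover have "dexp I j \<le> a j * dexp I j" using j(3) by simp
    ultimately have Cj: "dexp I j \<le> C j" using m(2) by (meson le_trans)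
    define d where "d = dexp I 0"
    define M where "M = (\<lambda>i. xpow 0 ((l - 1) * d) i + xpow j (dexp I j) i)"
    have I1: "mpow n I 1 = I" using mpow_1[OF mi] .
    have mu0: "xpow 0 d \<in> mpow n I 1" using dpos[OF n0] I1 unfolding d_def by simp
    have "(\<lambda>i. (l - 1) * xpow 0 d i) \<in> mpow n I ((l - 1) * 1)" using mpow_scale[OF mu0] .
    moreover have "(\<lambda>i. (l - 1) * xpow 0 d i) = xpow 0 ((l - 1) * d)" by (auto simp: xpow_def)
    ultimately have p1: "xpow 0 ((l - 1) * d) \<in> mpow n I (l - 1)" by simp
    have p2: "xpow j (dexp I j) \<in> mpow n I 1" using dpos[OF j(1)] I1 by simp
    have "M \<in> mpow n I (l - 1 + 1)" unfolding M_def using mpow_add[OF p1 p2] .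
    then have Mp: "M \<in> mpow n I l" using l by simp
    have MC: "\<forall>i. M i \<le> C i"
    proof
      fix i show "M i \<le> C i"
        using C0 Cj j(2) unfolding M_def xpow_def d_def by auto
    qed
    obtain m' where m': "m' \<in> mgens (mpow n I l)" "\<forall>i. m' i \<le> M i"
      using mgens_below[OF mpow_sub Mp] by blast
    have m'p: "m' \<in> mpow n I l" using m'(1) mgens_sub by blast
    have supp: "\<forall>i<n. i \<noteq> 0 \<longrightarrow> i \<noteq> j \<longrightarrow> m' i = 0"
    proof (intro allI impI)
      fix i assume "i < n" "i \<noteq> 0" "i \<noteq> j"
      then have "M i = 0" unfolding M_def xpow_def by auto
      then show "m' i = 0" using m'(2) by (metis le_zero_eq)
    qed
    have m'j: "m' j \<le> dexp I j" using m'(2) j(2) unfolding M_def xpow_def by (metis add_0 )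
    have m'0le: "m' 0 \<le> (l - 1) * d" using m'(2) j(2) unfolding M_def xpow_def
      by (metis add_0_right)
    have "\<not> m' 0 < (l - 1) * dexp I 0"
      using no_low[OF g l j(2) j(1) m'p supp m'j] by blast
    then have m'0: "m' 0 = (l - 1) * d" using m'0le unfolding d_def by simp
    have mon: "m' \<in> monomials n" using m'p mpow_sub by blast
    have "m' \<in> box n I (xpow 0 (l - 1))"
      unfolding box_def
    proof (intro CollectI conjI mon allI impI)
      fix i assume i: "i < n"
      show "xpow 0 (l - 1) i * dexp I i \<le> m' i"
        using m'0 unfolding xpow_def d_def by auto
      show "m' i \<le> (xpow 0 (l - 1) i + 1) * dexp I i"
      proof (cases "i = 0")
        case True then show ?thesis using m'0 unfolding xpow_def d_def by simp
      next
        case False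
        then show ?thesis using m'j supp i unfolding xpow_def by (cases "i = j") auto
      qed
    qed
    moreover have "\<forall>i. m' i \<le> C i" using m'(2) MC by (meson le_trans)
    ultimately show ?thesis using m'(1) by blast
  qed
qed


lemma Ia_x0:
  assumes "0 < n"
  shows "Ia n I (xpow 0 t) = mideal n {(\<lambda>i. m i - xpow 0 t i * dexp I i) | m.
      m \<in> box n I (xpow 0 t) \<inter> mgens (mpow n I (t + 1))}"
  unfolding Ia_def using sum_xpow0[OF assms] by simp

lemma mgens_eq: "a \<in> mgens S \<Longrightarrow> b \<in> S \<Longrightarrow> \<forall>i. b i \<le> a i \<Longrightarrow> b = a"
  unfolding mgens_def by blast

theorem mainTheorem11:
  fixes n :: nat and I :: "(nat \<Rightarrow> nat) set"
  assumes "n \<ge> 1" and "good n I"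
  shows "\<forall>t::nat. Ia n I (xpow 0 (t + 1)) =
           mcolon n (mprod n (Ia n I (xpow 0 t)) I) (mideal n {xpow 0 (dexp I 0)})"
proof
  fix t :: nat
  have n0: "0 < n" using assms(1) by simp
  have g: "good n I" by fact
  have mp: "m_primary n I" using g good_mp by blast
  have mi: "is_monomial_ideal n I" using mp unfolding m_primary_def by blast
  have I1: "mpow n I 1 = I" using mpow_1[OF mi] .
  have Isub: "I \<subseteq> monomials n" using mi unfolding is_monomial_ideal_def by blast
  define d where "d = dexp I 0"
  define D where "D = dexp I"
  have J: "Ia n I (xpow 0 t) = mideal n {(\<lambda>i. m i - xpow 0 t i * dexp I i) | m.
      m \<in> box n I (xpow 0 t) \<inter> mgens (mpow n I (t + 1))}" using Ia_x0[OF n0] .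
  have J1: "Ia n I (xpow 0 (t + 1)) = mideal n {(\<lambda>i. m i - xpow 0 (t + 1) i * dexp I i) | m.
      m \<in> box n I (xpow 0 (t + 1)) \<inter> mgens (mpow n I (t + 1 + 1))}" using Ia_x0[OF n0] .
  show "Ia n I (xpow 0 (t + 1)) =
           mcolon n (mprod n (Ia n I (xpow 0 t)) I) (mideal n {xpow 0 (dexp I 0)})"
  proof
    show "Ia n I (xpow 0 (t + 1)) \<subseteq> mcolon n (mprod n (Ia n I (xpow 0 t)) I) (mideal n {xpow 0 (dexp I 0)})"
    proof
      fix h assume "h \<in> Ia n I (xpow 0 (t + 1))"
      then obtain m where hm: "h \<in> monomials n"
        and m: "m \<in> box n I (xpow 0 (t + 1))" "m \<in> mgens (mpow n I (t + 1 + 1))"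
        and mh: "\<forall>i. m i - xpow 0 (t + 1) i * dexp I i \<le> h i"
        unfolding J1 mideal_def by blast
      have "m \<in> mprod n (mpow n I (t + 1)) I" using m(2) mgens_sub mpow_Suc
        by (metis Suc_eq_plus1 subsetD)
      then obtain p q where p: "p \<in> mpow n I (t + 1)" and q: "q \<in> I" and pq: "\<forall>i. p i + q i \<le> m i"
        using mprod_elim by blast
      obtain p' where p': "p' \<in> mgens (mpow n I (t + 1))" "\<forall>i. p' i \<le> p i"
        using mgens_below[OF mpow_sub p] by blast
      have qm: "q \<in> mpow n I 1" using q I1 by simp
      obtain q' where q': "q' \<in> mgens (mpow n I 1)" "\<forall>i. q' i \<le> q i"
        using mgens_below[OF mpow_sub qm] by blast
      have "(\<lambda>i. p' i + q' i) \<in> mpow n I (t + 1 + 1)"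
        using mpow_add[of p' n I "t+1" q' 1] p'(1) q'(1) mgens_sub by blast
      moreover have "\<forall>i. p' i + q' i \<le> m i" using pq p'(2) q'(2) by (meson add_mono le_trans)
      ultimately have "(\<lambda>i. p' i + q' i) = m" using mgens_eq[OF m(2)] by blast
      then have meq: "\<And>i. m i = p' i + q' i" by metis
      obtain aq where aq: "aq \<in> monomials n" "(\<Sum>i<n. aq i) = 0" "q' \<in> box n I aq"
        using good_box[OF g _ q'(1)] by auto
      have aq0: "\<And>i. i < n \<Longrightarrow> aq i = 0" using aq(2) by simp
      have qb: "\<And>i. i < n \<Longrightarrow> q' i \<le> D i" using aq(3) aq0 unfolding box_def D_def by auto
      obtain ap where ap: "ap \<in> monomials n" "(\<Sum>i<n. ap i) = t" "p' \<in> box n I ap"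
        using good_box[OF g _ p'(1)] by auto
      have "ap 0 \<le> (\<Sum>i<n. ap i)" by (rule member_le_sum) (use n0 in auto)
      then have ap0: "ap 0 \<le> t" using ap(2) by simp
      have "p' 0 \<le> (ap 0 + 1) * d" using ap(3) n0 unfolding box_def d_def by auto
      also have "\<dots> \<le> (t + 1) * d" using ap0 by simp
      finally have p'0u: "p' 0 \<le> (t + 1) * d" .
      have m0: "(t + 1) * d \<le> m 0" using m(1) n0 unfolding box_def xpow_def d_def by auto
      have mi1: "\<And>i. i < n \<Longrightarrow> i \<noteq> 0 \<Longrightarrow> m i \<le> D i" using m(1) unfolding box_def xpow_def D_def by auto
      have q0: "q' 0 \<le> d" using qb[OF n0] unfolding D_def d_def .
      have p'0l: "t * d \<le> p' 0" using m0 q0 meq[of 0] by (simp add: algebra_simps)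
      have p'mon: "p' \<in> monomials n" using p'(1) mgens_sub mpow_sub by blast
      have p'box: "p' \<in> box n I (xpow 0 t)"
        unfolding box_def
      proof (intro CollectI conjI p'mon allI impI)
        fix i assume i: "i < n"
        show "xpow 0 t i * dexp I i \<le> p' i" using p'0l unfolding xpow_def d_def by auto
        show "p' i \<le> (xpow 0 t i + 1) * dexp I i"
        proof (cases "i = 0")
          case True then show ?thesis using p'0u unfolding xpow_def d_def by simp
        next
          case False then show ?thesis using mi1[OF i False] meq[of i] unfolding xpow_def D_def by simp
        qed
      qed
      define g0 where "g0 = (\<lambda>i. p' i - xpow 0 t i * dexp I i)"
      have g0mon: "g0 \<in> monomials n" using p'mon unfolding g0_def monomials_def by auto
      have g0J: "g0 \<in> Ia n I (xpow 0 t)"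
      proof -
        have "g0 \<in> {(\<lambda>i. m i - xpow 0 t i * dexp I i) | m.
            m \<in> box n I (xpow 0 t) \<inter> mgens (mpow n I (t + 1))}"
          unfolding g0_def using p'box p'(1) by blast
        then show ?thesis unfolding J mideal_def using g0mon
          by (intro CollectI conjI bexI[of _ g0]) auto
      qed
      have q'I: "q' \<in> I" using q'(1) mgens_sub I1 by blast
      show "h \<in> mcolon n (mprod n (Ia n I (xpow 0 t)) I) (mideal n {xpow 0 (dexp I 0)})"
        unfolding mcolon_def
      proof (intro CollectI conjI hm ballI)
        fix c assume c: "c \<in> mideal n {xpow 0 (dexp I 0)}"
        then have cm: "c \<in> monomials n" and cd: "\<forall>i. xpow 0 d i \<le> c i"
          unfolding mideal_def d_def by auto
        have hc: "(\<lambda>i. h i + c i) \<in> monomials n" using monomials_add hm cm by blast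
        have le: "\<forall>i. g0 i + q' i \<le> h i + c i"
        proof
          fix i show "g0 i + q' i \<le> h i + c i"
          proof (cases "i = 0")
            case True
            have "d \<le> c 0" using cd[rule_format, of 0] unfolding xpow_def by simp
            moreover have "m 0 - (t + 1) * d \<le> h 0" using mh[rule_format, of 0] unfolding xpow_def d_def by simp
            ultimately show ?thesis using True meq[of 0] m0 p'0l unfolding g0_def xpow_def d_def
              by (simp add: algebra_simps)
          next
            case False
            then show ?thesis using mh[rule_format, of i] meq[of i] unfolding g0_def xpow_def by simp
          qed
        qed
        show "(\<lambda>i. h i + c i) \<in> mprod n (Ia n I (xpow 0 t)) I"
          by (rule mprod_intro[OF g0J q'I hc le])
      qed
    qed
  next
    show "mcolon n (mprod n (Ia n I (xpow 0 t)) I) (mideal n {xpow 0 (dexp I 0)}) \<subseteq> Ia n I (xpow 0 (t + 1))"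
    proof
      fix h assume h: "h \<in> mcolon n (mprod n (Ia n I (xpow 0 t)) I) (mideal n {xpow 0 (dexp I 0)})"
      then have hm: "h \<in> monomials n" unfolding mcolon_def by blast
      have mu: "xpow 0 d \<in> monomials n" using n0 unfolding monomials_def xpow_def by auto
      have "xpow 0 d \<in> mideal n {xpow 0 (dexp I 0)}" using mu unfolding mideal_def d_def by auto
      then have "(\<lambda>i. h i + xpow 0 d i) \<in> mprod n (Ia n I (xpow 0 t)) I"
        using h unfolding mcolon_def d_def by blast
      then obtain a b where a: "a \<in> Ia n I (xpow 0 t)" and b: "b \<in> I"
        and ab: "\<forall>i. a i + b i \<le> h i + xpow 0 d i"
        using mprod_elim by blast
      obtain p where p: "p \<in> box n I (xpow 0 t)" "p \<in> mgens (mpow n I (t + 1))"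
        and pa: "\<forall>i. p i - xpow 0 t i * dexp I i \<le> a i"
        using a unfolding J mideal_def by blast
      define C where "C = (\<lambda>i. h i + xpow 0 ((t + 1) * d) i)"
      have Cm: "C \<in> monomials n" using hm n0 unfolding C_def monomials_def xpow_def by auto
      have bm: "b \<in> mpow n I 1" using b I1 by simp
      have pb: "(\<lambda>i. p i + b i) \<in> mpow n I (t + 1 + 1)"
        using mpow_add[of p n I "t+1" b 1] p(2) mgens_sub bm by blast
      have p0: "t * d \<le> p 0" using p(1) n0 unfolding box_def xpow_def d_def by auto
      have pbC: "\<forall>i. p i + b i \<le> C i"
      proof
        fix i show "p i + b i \<le> C i"
        proof (cases "i = 0")
          case True
          then show ?thesis using pa[rule_format, of 0] ab[rule_format, of 0] p0
            unfolding C_def xpow_def d_def by (simp add: algebra_simps)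
        next
          case False
          then show ?thesis using pa[rule_format, of i] ab[rule_format, of i]
            unfolding C_def xpow_def by simp
        qed
      qed
      have Cp: "C \<in> mpow n I (t + 2)" using mpow_up[OF pb Cm pbC] by simp
      have C0: "(t + 2 - 1) * dexp I 0 \<le> C 0" unfolding C_def xpow_def d_def by simp
      obtain m where m: "m \<in> mgens (mpow n I (t + 2)) \<inter> box n I (xpow 0 (t + 2 - 1))"
        and mC: "\<forall>i. m i \<le> C i"
        using key[OF g n0 _ Cp C0] by auto
      have le: "\<forall>i. m i - xpow 0 (t + 1) i * dexp I i \<le> h i"
      proof
        fix i show "m i - xpow 0 (t + 1) i * dexp I i \<le> h i"
          using mC[rule_format, of i] unfolding C_def xpow_def d_def by auto
      qed
      have "m \<in> box n I (xpow 0 (t + 1)) \<inter> mgens (mpow n I (t + 1 + 1))" using m by simp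
      then have "(\<lambda>i. m i - xpow 0 (t + 1) i * dexp I i) \<in> {(\<lambda>i. m i - xpow 0 (t + 1) i * dexp I i) | m.
            m \<in> box n I (xpow 0 (t + 1)) \<inter> mgens (mpow n I (t + 1 + 1))}" by blast
      then show "h \<in> Ia n I (xpow 0 (t + 1))"
        unfolding J1 mideal_def using hm le
        by (intro CollectI conjI bexI[of _ "(\<lambda>i. m i - xpow 0 (t + 1) i * dexp I i)"]) auto
    qed
  qed
qed

end
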